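(* Under the standing assumptions below, if $x$ is sufficiently large (in terms of $\epsilon$), then $U+V\subseteq Q$, where the sum is taken modulo $36$.
   Context: Standing assumptions and notation: $\epsilon>0$ is fixed, $\delta_0=\frac14-\frac{2}{\pi^2}$, and $A\subseteq[1,x]\cap\mathbb{N}$ is a set with $|A|>(\delta_0+\epsilon)x$ such that $A+A=\{a+b:a,b\in A\}$ contains no squarefree integer, and $A$ is not a subset of $4\mathbb{N}$, nor of $9\mathbb{N}$, nor of $\{n\in\mathbb{N}:n\equiv 2\pmod 4\}$. For $a\in\{0,\dots,35\}$ put $\delta_a=\frac{36\cdot\#\{n\in A: n\equiv a\pmod{36}\}}{x}$. Let $U$ be the set of residues $a\bmod 36$ with $\delta_a>1-\frac{9}{\pi^2}+\epsilon/100$, let $V$ be the set of residues $a\bmod 36$ with $\delta_a>0$, and let $Q=\{0,4,8,9,12,16,18,20,24,27,28,32\}$ (the residue classes mod $36$ containing no squarefree integers). *)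

theory Defs
  imports Complex_Main "HOL-Computational_Algebra.Squarefree"
begin

definition delta0 :: real where
  "delta0 = 1/4 - 2 / pi^2"

definition dens :: "real \<Rightarrow> nat set \<Rightarrow> nat \<Rightarrow> real" where
  "dens x A a = 36 * real (card {n \<in> A. n mod 36 = a}) / x"

definition Uset :: "real \<Rightarrow> real \<Rightarrow> nat set \<Rightarrow> nat set" where
  "Uset \<epsilon> x A = {a. a < 36 \<and> dens x A a > 1 - 9 / pi^2 + \<epsilon> / 100}"

definition Vset :: "real \<Rightarrow> nat set \<Rightarrow> nat set" where
  "Vset x A = {a. a < 36 \<and> dens x A a > 0}"

definition Qset :: "nat set" where
  "Qset = {0,4,8,9,12,16,18,20,24,27,28,32}"

end

theory Submission imports Defs "HOL-Analysis.Analysis" "HOL-Number_Theory.Number_Theory"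
begin


definition Tset :: "nat set \<Rightarrow> nat set" where
  "Tset S = {n. n \<ge> 1 \<and> (\<forall>p\<in>S. \<not> p dvd n)}"

lemma euler_has_sum:
  assumes "finite S" "\<forall>p\<in>S. prime p"
  shows "((\<lambda>n::nat. 1 / (real n)^2) has_sum ((\<Prod>p\<in>S. 1 - 1/(real p)^2) * (pi^2/6))) (Tset S)"
  using assms
proof (induction S rule: finite_induct)
  case empty
  have "((\<lambda>n::nat. 1 / (real (n+1))^2) has_sum (pi^2/6)) UNIV"
    using sums_nonneg_imp_has_sum[OF inverse_squares_sums] by simp
  hence "(((\<lambda>n::nat. 1 / (real n)^2) \<circ> Suc) has_sum (pi^2/6)) UNIV"
    by (simp add: o_def)
  hence "((\<lambda>n::nat. 1 / (real n)^2) has_sum (pi^2/6)) (Suc ` UNIV)"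
    by (subst has_sum_reindex) auto
  moreover have "Suc ` UNIV = Tset {}"
    by (auto simp: Tset_def image_iff Suc_le_eq gr0_conv_Suc)
  ultimately show ?case by simp
next
  case (insert q F)
  define P where "P = (\<Prod>p\<in>F. 1 - 1/(real p)^2) * (pi^2/6)"
  let ?f = "\<lambda>n::nat. 1 / (real n)^2"
  have IH: "(?f has_sum P) (Tset F)" using insert unfolding P_def by simp
  have q: "prime q" using insert by simp
  have inj: "inj_on ((*) q) (Tset F)" using q by (auto simp: inj_on_def prime_gt_0_nat)
  have "((\<lambda>n. (1/(real q)^2) * ?f n) has_sum ((1/(real q)^2) * P)) (Tset F)"
    by (rule has_sum_cmult_right[OF IH])
  hence "((?f \<circ> (*) q) has_sum ((1/(real q)^2) * P)) (Tset F)"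
    by (simp add: o_def power_mult_distrib)
  hence H2: "(?f has_sum ((1/(real q)^2) * P)) ((*) q ` Tset F)"
    using has_sum_reindex[OF inj] by blast
  have sub: "(*) q ` Tset F \<subseteq> Tset F"
  proof
    fix n assume "n \<in> (*) q ` Tset F"
    then obtain m where m: "m \<in> Tset F" "n = q * m" by auto
    have "q \<ge> 1" using q prime_gt_0_nat by (simp add: Suc_leI)
    moreover have "\<not> p dvd q * m" if "p \<in> F" for p
    proof
      assume "p dvd q * m"
      moreover have "prime p" using insert that by simp
      ultimately have "p dvd q \<or> p dvd m" using prime_dvd_mult_iff by blast
      moreover have "\<not> p dvd q" using \<open>prime p\<close> q insert(2) that
        by (metis primes_dvd_imp_eq)
      ultimately show False using m that unfolding Tset_def by auto
    qed
    ultimately show "n \<in> Tset F" using m unfolding Tset_def by auto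
  qed
  have eq: "Tset (insert q F) = Tset F - (*) q ` Tset F"
  proof
    show "Tset (insert q F) \<subseteq> Tset F - (*) q ` Tset F"
      unfolding Tset_def by auto
    show "Tset F - (*) q ` Tset F \<subseteq> Tset (insert q F)"
    proof
      fix n assume n: "n \<in> Tset F - (*) q ` Tset F"
      have "\<not> q dvd n"
      proof
        assume "q dvd n"
        then obtain m where m: "n = q * m" by auto
        have "m \<ge> 1" using n m unfolding Tset_def by (cases m) auto
        moreover have "\<not> p dvd m" if "p \<in> F" for p
          using n m that unfolding Tset_def by auto
        ultimately have "m \<in> Tset F" unfolding Tset_def by auto
        thus False using n m by auto
      qed
      thus "n \<in> Tset (insert q F)" using n unfolding Tset_def by auto
    qed
  qed
  have "(?f has_sum (P - (1/(real q)^2) * P)) (Tset (insert q F))"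
    unfolding eq by (rule has_sum_Diff[OF IH H2 sub])
  moreover have "P - (1/(real q)^2) * P = (\<Prod>p\<in>insert q F. 1 - 1/(real p)^2) * (pi^2/6)"
    using insert unfolding P_def by (simp add: algebra_simps)
  ultimately show ?case by metis
qed

lemma euler_bound:
  assumes "finite S" "\<forall>p\<in>S. prime p"
  shows "(\<Prod>p\<in>S. 1 - 1/(real p)^2) * (pi^2/6) \<ge> 1"
proof -
  have "((\<lambda>n::nat. 1 / (real n)^2) has_sum 1) {1}"
    using has_sum_finite[of "{1::nat}" "\<lambda>n::nat. 1 / (real n)^2"] by simp
  moreover have "1 \<in> Tset S" unfolding Tset_def using assms(2)
    by (auto dest: prime_gt_1_nat)
  ultimately show ?thesis
    using has_sum_mono_neutral[OF _ euler_has_sum[OF assms]] by (force)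
qed



lemma block_card:
  assumes m: "(m::nat) > 0" and s: "s < m"
  shows "card {n \<in> {c..<c+m}. n mod m = s} = 1"
proof -
  have inj: "inj_on (\<lambda>n. n mod m) {c..<c+m}"
  proof (rule inj_onI)
    fix x y assume xy: "x \<in> {c..<c+m}" "y \<in> {c..<c+m}" "x mod m = y mod m"
    show "x = y"
    proof (rule ccontr)
      assume "x \<noteq> y"
      then consider "x < y" | "y < x" by linarith
      thus False
      proof cases
        case 1
        have "m dvd y - x" using mod_eq_dvd_iff_nat[of x y m] 1 xy(3) by simp
        moreover have "0 < y - x" "y - x < m" using 1 xy by auto
        ultimately show False by (meson nat_dvd_not_less)
      next
        case 2
        have "m dvd x - y" using mod_eq_dvd_iff_nat[of y x m] 2 xy(3) by simp
        moreover have "0 < x - y" "x - y < m" using 2 xy by auto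
        ultimately show False by (meson nat_dvd_not_less)
      qed
    qed
  qed
  have "(\<lambda>n. n mod m) ` {c..<c+m} \<subseteq> {..<m}" using m by auto
  moreover have "card ((\<lambda>n. n mod m) ` {c..<c+m}) = card {..<m}"
    using card_image[OF inj] by simp
  ultimately have img: "(\<lambda>n. n mod m) ` {c..<c+m} = {..<m}"
    by (intro card_subset_eq) auto
  then obtain n0 where n0: "n0 \<in> {c..<c+m}" "n0 mod m = s" using s
    by (metis imageE lessThan_iff)
  have "{n \<in> {c..<c+m}. n mod m = s} = {n0}"
    using n0 inj unfolding inj_on_def by auto
  thus ?thesis by simp
qed

lemma ap_count:
  assumes m: "(m::nat) > 0"
  shows "\<bar>real (card {n \<in> {b<..b+N}. n mod m = r mod m}) - real N / real m\<bar> \<le> 1"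
proof (induction N rule: less_induct)
  case (less N)
  define g where "g N = card {n \<in> {b<..b+N}. n mod m = r mod m}" for N
  have rm: "r mod m < m" using m by simp
  show ?case
  proof (cases "N < m")
    case True
    have "{n \<in> {b<..b+N}. n mod m = r mod m} \<subseteq> {n \<in> {b+1..<b+1+m}. n mod m = r mod m}"
      using True by auto
    hence "g N \<le> card {n \<in> {b+1..<b+1+m}. n mod m = r mod m}" unfolding g_def
      by (intro card_mono) auto
    hence "g N \<le> 1" using block_card[OF m rm, of "b+1"] by simp
    moreover have "real N / real m < 1" using True m by simp
    moreover have "real N / real m \<ge> 0" by simp
    ultimately show ?thesis unfolding g_def by (smt (verit) of_nat_le_1_iff of_nat_0_le_iff)
  next
    case False
    then obtain N' where N': "N = N' + m" by (metis add.commute le_Suc_ex not_less)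
    have "{n \<in> {b<..b+N}. n mod m = r mod m} = {n \<in> {b<..b+N'}. n mod m = r mod m} \<union> {n \<in> {b+N'+1..<b+N'+1+m}. n mod m = r mod m}"
      using N' by auto
    moreover have "{n \<in> {b<..b+N'}. n mod m = r mod m} \<inter> {n \<in> {b+N'+1..<b+N'+1+m}. n mod m = r mod m} = {}"
      by auto
    ultimately have "g N = g N' + 1" unfolding g_def
      using block_card[OF m rm, of "b+N'+1"] by (simp add: card_Un_disjoint)
    moreover have "real N / real m = real N' / real m + 1" using N' m by (simp add: field_simps)
    moreover have "\<bar>real (g N') - real N' / real m\<bar> \<le> 1" using less[of N'] N' m unfolding g_def by simp
    ultimately show ?thesis unfolding g_def by simp
  qed
qed

lemma sieve_count:
  fixes S :: "nat set"
  assumes "finite S" "\<forall>p\<in>S. prime p"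
  shows "\<forall>m r. m > 0 \<and> (\<forall>p\<in>S. coprime m p) \<longrightarrow>
    \<bar>real (card {n\<in>{b<..b+N}. n mod m = r mod m \<and> (\<forall>p\<in>S. \<not> p^2 dvd n)})
       - real N / real m * (\<Prod>p\<in>S. 1 - 1/(real p)^2)\<bar> \<le> 2 ^ card S"
  using assms
proof (induction S rule: finite_induct)
  case empty
  show ?case using ap_count by simp
next
  case (insert q F)
  show ?case
  proof (intro allI impI)
    fix m r :: nat assume mr: "m > 0 \<and> (\<forall>p\<in>insert q F. coprime m p)"
    have q: "prime q" using insert by simp
    have cmq: "coprime m (q^2)" using mr by simp
    obtain r' where r': "[r' = r] (mod m) \<and> [r' = 0] (mod q^2)"
      using binary_chinese_remainder_nat[OF cmq] by blast
    have iff: "(n mod m = r mod m \<and> q^2 dvd n) \<longleftrightarrow> n mod (m * q^2) = r' mod (m * q^2)" for n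
    proof
      assume h: "n mod m = r mod m \<and> q^2 dvd n"
      have "[n = r'] (mod m)" using h r' unfolding cong_def by simp
      moreover have "[n = r'] (mod q^2)" using h r' unfolding cong_def
        by (simp add: dvd_eq_mod_eq_0)
      ultimately have "[n = r'] (mod m * q^2)" using cmq by (rule coprime_cong_mult_nat)
      thus "n mod (m * q^2) = r' mod (m * q^2)" by (simp add: cong_def)
    next
      assume h: "n mod (m * q^2) = r' mod (m * q^2)"
      hence h': "[n = r'] (mod m * q^2)" by (simp add: cong_def)
      have "[n = r'] (mod m)" using cong_modulus_mult_nat[OF h'] .
      hence "n mod m = r mod m" using r' unfolding cong_def by simp
      moreover have "[n = r'] (mod q^2)" using cong_modulus_mult_nat[of n r' "q^2" m] h'
        by (simp add: mult.commute)
      hence "q^2 dvd n" using r' unfolding cong_def by (simp add: dvd_eq_mod_eq_0)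
      ultimately show "n mod m = r mod m \<and> q^2 dvd n" by simp
    qed
    define X where "X = {n\<in>{b<..b+N}. n mod m = r mod m \<and> (\<forall>p\<in>F. \<not> p^2 dvd n)}"
    define Y where "Y = {n\<in>{b<..b+N}. n mod (m*q^2) = r' mod (m*q^2) \<and> (\<forall>p\<in>F. \<not> p^2 dvd n)}"
    have YX: "Y \<subseteq> X" unfolding X_def Y_def using iff by auto
    have eq: "{n\<in>{b<..b+N}. n mod m = r mod m \<and> (\<forall>p\<in>insert q F. \<not> p^2 dvd n)} = X - Y"
      unfolding X_def Y_def using iff by auto
    have finX: "finite X" unfolding X_def by simp
    have cardeq: "real (card (X - Y)) = real (card X) - real (card Y)"
      using card_Diff_subset[OF finite_subset[OF YX finX] YX] card_mono[OF finX YX] by simp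
    define PP where "PP = (\<Prod>p\<in>F. 1 - 1/(real p)^2)"
    have IH: "\<forall>m r. m > 0 \<and> (\<forall>p\<in>F. coprime m p) \<longrightarrow>
      \<bar>real (card {n\<in>{b<..b+N}. n mod m = r mod m \<and> (\<forall>p\<in>F. \<not> p^2 dvd n)})
       - real N / real m * PP\<bar> \<le> 2 ^ card F"
      using insert.IH insert.prems unfolding PP_def by simp
    have hX: "\<bar>real (card X) - real N / real m * PP\<bar> \<le> 2 ^ card F"
      using IH[rule_format, of m r] mr unfolding X_def by simp
    have cop: "coprime (m * q^2) p" if "p \<in> F" for p
    proof -
      have "coprime m p" using mr that by simp
      moreover have "coprime q p"
        by (rule primes_coprime) (use q insert that in auto)
      ultimately show ?thesis by simp
    qed
    have mq: "m * q^2 > 0" using mr q by (simp add: prime_gt_0_nat)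
    have hY: "\<bar>real (card Y) - real N / real (m * q^2) * PP\<bar> \<le> 2 ^ card F"
      using IH[rule_format, of "m * q^2" r'] mq cop unfolding Y_def by blast
    have prodeq: "(\<Prod>p\<in>insert q F. 1 - 1/(real p)^2) = (1 - 1/(real q)^2) * PP"
      using insert unfolding PP_def by simp
    have "real N / real m * ((1 - 1/(real q)^2) * PP) = real N / real m * PP - real N / real (m * q^2) * PP"
      using mr q by (simp add: field_simps)
    moreover have "(2::real) ^ card (insert q F) = 2 ^ card F + 2 ^ card F" using insert by simp
    ultimately show "\<bar>real (card {n\<in>{b<..b+N}. n mod m = r mod m \<and> (\<forall>p\<in>insert q F. \<not> p^2 dvd n)})
       - real N / real m * (\<Prod>p\<in>insert q F. 1 - 1/(real p)^2)\<bar> \<le> 2 ^ card (insert q F)"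
      unfolding eq cardeq prodeq using hX hY unfolding abs_le_iff by linarith
  qed
qed



lemma tail_sum_aux:
  assumes "(P::nat) \<ge> 1" "K \<ge> P"
  shows "(\<Sum>d\<in>{P<..K}. 1 / (real d)^2) \<le> 1 / real P - 1 / real K"
  using assms(2)
proof (induction K rule: dec_induct)
  case base
  then show ?case by simp
next
  case (step K)
  have K1: "real K \<ge> 1" using step assms by simp
  have "{P<..Suc K} = insert (Suc K) {P<..K}" using step by auto
  hence "(\<Sum>d\<in>{P<..Suc K}. 1 / (real d)^2) = 1 / (real (Suc K))^2 + (\<Sum>d\<in>{P<..K}. 1 / (real d)^2)"
    by simp
  moreover have "1 / (real (Suc K))^2 \<le> 1 / (real K * real (Suc K))"
    using K1 by (intro divide_left_mono) (auto simp: power2_eq_square)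
  moreover have "1 / (real K * real (Suc K)) = 1 / real K - 1 / real (Suc K)"
    using K1 by (simp add: field_simps)
  ultimately show ?case using step.IH by linarith
qed

lemma tail_sum:
  assumes "(P::nat) \<ge> 1"
  shows "(\<Sum>d\<in>{P<..K}. 1 / (real d)^2) \<le> 1 / real P"
proof (cases "K \<ge> P")
  case True
  have "0 \<le> 1 / real K" by simp
  then show ?thesis using tail_sum_aux[OF assms True] by linarith
next
  case False
  then show ?thesis by simp
qed

lemma prime_coprime36:
  assumes "prime (p::nat)" "p \<ge> 5"
  shows "coprime 36 p"
proof -
  have "\<not> p dvd 36"
  proof
    assume "p dvd 36"
    hence "p dvd 2^2 * 3^2" by simp
    hence "p dvd 2^2 \<or> p dvd 3^2" using assms(1) prime_dvd_mult_iff by blast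
    hence "p dvd 2 \<or> p dvd 3" using assms(1) prime_dvd_power by blast
    hence "p \<le> 3" using dvd_imp_le[of p 2] dvd_imp_le[of p 3] by auto
    thus False using assms by simp
  qed
  thus ?thesis using assms(1) by (simp add: coprime_commute prime_imp_coprime)
qed



lemma nonsq_bound:
  fixes r b N P :: nat
  assumes r4: "\<not> 4 dvd r" and r9: "\<not> 9 dvd r" and P1: "P \<ge> 1" and bN: "b \<le> N"
  defines "S \<equiv> {p. prime p \<and> 5 \<le> p \<and> p \<le> P}"
  shows "real (card {n\<in>{b<..b+N}. n mod 36 = r mod 36 \<and> \<not> squarefree n})
     \<le> real N / 36 * (1 - (\<Prod>p\<in>S. 1 - 1/(real p)^2)) + 1 + 2 ^ card S
        + real N / real P + sqrt (2 * real N)"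
proof -
  define I where "I = {b<..b+N}"
  define K where "K = nat \<lfloor>sqrt (2 * real N)\<rfloor>"
  define B where "B = {n\<in>I. n mod 36 = r mod 36 \<and> \<not> squarefree n}"
  define C0 where "C0 = {n\<in>I. n mod 36 = r mod 36}"
  define C1 where "C1 = {n\<in>I. n mod 36 = r mod 36 \<and> (\<forall>p\<in>S. \<not> p^2 dvd n)}"
  define E where "E d = {n\<in>I. n mod (d^2) = 0 mod (d^2)}" for d :: nat
  have finS: "finite S" unfolding S_def by simp
  have primS: "\<forall>p\<in>S. prime p" unfolding S_def by simp
  have sub: "B \<subseteq> (C0 - C1) \<union> (\<Union>d\<in>{P<..K}. E d)"
  proof
    fix n assume n: "n \<in> B"
    hence nI: "n \<in> I" and nr: "n mod 36 = r mod 36" and nsq: "\<not> squarefree n"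
      unfolding B_def by auto
    have n0: "n \<noteq> 0" using nI unfolding I_def by auto
    obtain p where p: "prime p" "p^2 dvd n"
      using nsq squarefree_factorial_semiring[OF n0] by blast
    have "p \<noteq> 2"
    proof
      assume "p = 2"
      hence "4 dvd n" using p by simp
      have d: "(4::nat) dvd 36" by simp
      have "n mod 36 mod 4 = n mod 4" using mod_mod_cancel[OF d] .
      moreover have "r mod 36 mod 4 = r mod 4" using mod_mod_cancel[OF d] .
      ultimately have "n mod 4 = r mod 4" using nr by simp
      hence "4 dvd r" using \<open>4 dvd n\<close> by (simp add: dvd_eq_mod_eq_0)
      thus False using r4 by simp
    qed
    moreover have "p \<noteq> 3"
    proof
      assume "p = 3"
      hence "9 dvd n" using p by simp
      have d: "(9::nat) dvd 36" by simp
      have "n mod 36 mod 9 = n mod 9" using mod_mod_cancel[OF d] .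
      moreover have "r mod 36 mod 9 = r mod 9" using mod_mod_cancel[OF d] .
      ultimately have "n mod 9 = r mod 9" using nr by simp
      hence "9 dvd r" using \<open>9 dvd n\<close> by (simp add: dvd_eq_mod_eq_0)
      thus False using r9 by simp
    qed
    moreover have "p \<noteq> 4"
    proof
      assume "p = 4"
      hence "prime ((2::nat) * 2)" using p(1) by simp
      hence "(2::nat) = 1 \<or> (2::nat) = 1" by (rule prime_product)
      thus False by simp
    qed
    ultimately have p5: "p \<ge> 5" using prime_ge_2_nat[OF p(1)] by linarith
    show "n \<in> (C0 - C1) \<union> (\<Union>d\<in>{P<..K}. E d)"
    proof (cases "p \<le> P")
      case True
      hence "p \<in> S" using p5 p unfolding S_def by simp
      hence "n \<notin> C1" using p unfolding C1_def by auto
      moreover have "n \<in> C0" using nI nr unfolding C0_def by simp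
      ultimately show ?thesis by simp
    next
      case False
      have "p^2 \<le> n" using p n0 by (simp add: dvd_imp_le)
      also have "n \<le> 2 * N" using nI bN unfolding I_def by simp
      finally have "real p ^ 2 \<le> 2 * real N" by (metis of_nat_le_iff of_nat_mult of_nat_numeral of_nat_power)
      hence "real p \<le> sqrt (2 * real N)" using real_le_rsqrt by blast
      hence "p \<le> K" unfolding K_def by (simp add: le_nat_floor)
      hence "p \<in> {P<..K}" using False by simp
      moreover have "n \<in> E p" using nI p unfolding E_def by simp
      ultimately show ?thesis by blast
    qed
  qed
  have finI: "finite I" unfolding I_def by simp
  have c1: "card B \<le> card ((C0 - C1) \<union> (\<Union>d\<in>{P<..K}. E d))"
    by (rule card_mono[OF _ sub]) (use finI in \<open>auto simp: C0_def E_def\<close>)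
  have c2: "card ((C0 - C1) \<union> (\<Union>d\<in>{P<..K}. E d)) \<le> card (C0 - C1) + card (\<Union>d\<in>{P<..K}. E d)"
    by (rule card_Un_le)
  have c3: "card (\<Union>d\<in>{P<..K}. E d) \<le> (\<Sum>d\<in>{P<..K}. card (E d))" by (rule card_UN_le) simp
  have "card B \<le> card (C0 - C1) + (\<Sum>d\<in>{P<..K}. card (E d))" using c1 c2 c3 by linarith
  hence cB: "real (card B) \<le> real (card (C0 - C1)) + (\<Sum>d\<in>{P<..K}. real (card (E d)))"
    by (metis of_nat_add of_nat_le_iff of_nat_sum)
  have C10: "C1 \<subseteq> C0" unfolding C0_def C1_def by auto
  have finC0: "finite C0" unfolding C0_def using finI by simp
  have cC: "real (card (C0 - C1)) = real (card C0) - real (card C1)"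
    using card_Diff_subset[OF finite_subset[OF C10 finC0] C10] card_mono[OF finC0 C10] by simp
  have hC0: "\<bar>real (card C0) - real N / real 36\<bar> \<le> 1"
    using ap_count[of 36 b N r] unfolding C0_def I_def by simp
  have cop: "\<forall>p\<in>S. coprime 36 p" unfolding S_def using prime_coprime36 by auto
  have hC1: "\<bar>real (card C1) - real N / real 36 * (\<Prod>p\<in>S. 1 - 1/(real p)^2)\<bar> \<le> 2 ^ card S"
  proof -
    have h: "\<forall>m r. m > 0 \<and> (\<forall>p\<in>S. coprime m p) \<longrightarrow>
    \<bar>real (card {n\<in>{b<..b+N}. n mod m = r mod m \<and> (\<forall>p\<in>S. \<not> p^2 dvd n)})
       - real N / real m * (\<Prod>p\<in>S. 1 - 1/(real p)^2)\<bar> \<le> 2 ^ card S"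
      by (rule sieve_count[OF finS primS])
    have "(36::nat) > 0 \<and> (\<forall>p\<in>S. coprime 36 p)" using cop by simp
    with h have "\<bar>real (card {n\<in>{b<..b+N}. n mod 36 = r mod 36 \<and> (\<forall>p\<in>S. \<not> p^2 dvd n)})
       - real N / real (36::nat) * (\<Prod>p\<in>S. 1 - 1/(real p)^2)\<bar> \<le> 2 ^ card S" by blast
    thus ?thesis unfolding C1_def I_def by simp
  qed
  have hE: "real (card (E d)) \<le> real N / (real d)^2 + 1" if "d \<in> {P<..K}" for d
  proof -
    have "d^2 > 0" using that by simp
    from ap_count[OF this, of b N 0] show ?thesis unfolding E_def I_def by simp
  qed
  have "(\<Sum>d\<in>{P<..K}. real (card (E d))) \<le> (\<Sum>d\<in>{P<..K}. real N / (real d)^2 + 1)"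
    by (rule sum_mono) (rule hE)
  also have "\<dots> = real N * (\<Sum>d\<in>{P<..K}. 1 / (real d)^2) + real (card {P<..K})"
    by (simp add: sum.distrib sum_distrib_left)
  also have "\<dots> \<le> real N * (1 / real P) + real K"
  proof (rule add_mono)
    show "real N * (\<Sum>d\<in>{P<..K}. 1 / (real d)^2) \<le> real N * (1 / real P)"
      by (rule mult_left_mono[OF tail_sum[OF P1]]) simp
    show "real (card {P<..K}) \<le> real K" by simp
  qed
  also have "real K \<le> sqrt (2 * real N)" unfolding K_def by simp
  finally have hEs: "(\<Sum>d\<in>{P<..K}. real (card (E d))) \<le> real N / real P + sqrt (2 * real N)"
    by simp
  show ?thesis
    using cB cC hC0 hC1 hEs unfolding B_def I_def abs_le_iff
    by (simp add: algebra_simps)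
qed



theorem lemma1:
  fixes \<epsilon> :: real
  assumes "\<epsilon> > 0"
  shows "\<exists>x0. \<forall>x \<ge> x0. \<forall>A :: nat set.
    A \<subseteq> {n. 1 \<le> n \<and> real n \<le> x} \<longrightarrow>
    real (card A) > (delta0 + \<epsilon>) * x \<longrightarrow>
    (\<forall>a\<in>A. \<forall>b\<in>A. \<not> squarefree (a + b)) \<longrightarrow>
    \<not> A \<subseteq> {n. 4 dvd n} \<longrightarrow>
    \<not> A \<subseteq> {n. 9 dvd n} \<longrightarrow>
    \<not> A \<subseteq> {n. n mod 4 = 2} \<longrightarrow>
    (\<forall>u\<in>Uset \<epsilon> x A. \<forall>v\<in>Vset x A. (u + v) mod 36 \<in> Qset)"
proof -
  define \<eta> where "\<eta> = \<epsilon> / 100"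
  have eta: "\<eta> > 0" using assms unfolding \<eta>_def by simp
  define P :: nat where "P = nat \<lceil>144 / \<eta>\<rceil> + 1"
  have P1: "P \<ge> 1" unfolding P_def by simp
  have "real P \<ge> 144 / \<eta>" unfolding P_def by linarith
  hence invP: "1 / real P \<le> \<eta> / 144" using eta P1 by (simp add: field_simps)
  define S where "S = {p. prime p \<and> 5 \<le> p \<and> p \<le> P}"
  define cS where "cS = (\<Prod>p\<in>S. 1 - 1/(real p)^2)"
  define c where "c = 9 / pi^2"
  define C :: real where "C = 1 + 2 ^ card S"
  have finS: "finite S" unfolding S_def by simp
  have cSc: "cS \<ge> c"
  proof -
    have "2 \<notin> S" "3 \<notin> S" unfolding S_def by auto
    hence e: "(\<Prod>p\<in>insert 2 (insert 3 S). 1 - 1/(real p)^2) = (3/4) * ((8/9) * cS)"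
      using finS unfolding cS_def by simp
    have "(\<Prod>p\<in>insert 2 (insert 3 S). 1 - 1/(real p)^2) * (pi^2/6) \<ge> 1"
      by (rule euler_bound) (use finS in \<open>auto simp: S_def\<close>)
    hence "(3/4) * ((8/9) * cS) * (pi^2/6) \<ge> 1" unfolding e .
    hence "cS * pi^2 \<ge> 9" by (simp add: field_simps)
    thus ?thesis unfolding c_def by (simp add: field_simps)
  qed
  have cS1: "cS \<le> 1" unfolding cS_def
    by (rule prod_le_1) (auto simp: S_def)
  define x0 where "x0 = 144 * C / \<eta> + 2 * 72^2 / \<eta>^2 + 1"
  show ?thesis
  proof (intro exI[of _ x0] allI impI ballI)
    fix x :: real and A :: "nat set" and u v
    assume x: "x \<ge> x0" and Ax: "A \<subseteq> {n. 1 \<le> n \<and> real n \<le> x}"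
      and nsq: "\<forall>a\<in>A. \<forall>b\<in>A. \<not> squarefree (a + b)"
      and u: "u \<in> Uset \<epsilon> x A" and v: "v \<in> Vset x A"
    have C0: "C \<ge> 0" unfolding C_def by simp
    have x1: "x \<ge> 144 * C / \<eta>" "x \<ge> 2 * 72^2 / \<eta>^2" "x > 0"
    proof -
      have a: "144 * C / \<eta> \<ge> 0" using C0 eta by simp
      have b: "2 * 72^2 / \<eta>^2 \<ge> 0" using eta by simp
      show "x \<ge> 144 * C / \<eta>" "x \<ge> 2 * 72^2 / \<eta>^2" "x > 0"
        using x a b unfolding x0_def by linarith+
    qed
    have Cx: "C \<le> \<eta> * x / 144" using x1(1) eta by (simp add: field_simps)
    have sq: "sqrt (2 * x) \<le> \<eta> * x / 72"
    proof -
      have "2 * x \<le> (\<eta> * x / 72)^2"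
      proof -
        have "\<eta>^2 * x \<ge> 2 * 72^2" using x1(2) eta by (simp add: field_simps)
        hence "\<eta>^2 * x * x \<ge> 2 * 72^2 * x" using x1(3) by (intro mult_right_mono) auto
        thus ?thesis by (simp add: power2_eq_square field_simps)
      qed
      hence "sqrt (2 * x) \<le> sqrt ((\<eta> * x / 72)^2)" by (rule real_sqrt_le_mono)
      thus ?thesis using eta x1(3) by simp
    qed
    define N where "N = nat \<lfloor>x\<rfloor>"
    have Nx: "real N \<le> x" unfolding N_def using x1(3) by linarith
    have AN: "\<And>n. n \<in> A \<Longrightarrow> 1 \<le> n \<and> n \<le> N"
      using Ax unfolding N_def by (auto simp: le_nat_floor)
    define Au where "Au = {n \<in> A. n mod 36 = u}"
    have "dens x A u > 1 - 9 / pi^2 + \<epsilon> / 100" using u unfolding Uset_def by simp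
    hence cAu: "real (card Au) > (1 - c + \<eta>) * x / 36"
      unfolding dens_def Au_def c_def \<eta>_def using x1(3) by (simp add: field_simps)
    have "dens x A v > 0" using v unfolding Vset_def by simp
    hence "card {n \<in> A. n mod 36 = v} > 0" unfolding dens_def using x1(3)
      by (simp add: zero_less_divide_iff)
    hence "{n \<in> A. n mod 36 = v} \<noteq> {}" by (metis card.empty less_irrefl)
    then obtain b where b: "b \<in> A" "b mod 36 = v" by auto
    have bN: "b \<le> N" using AN b(1) by simp
    show "(u + v) mod 36 \<in> Qset"
    proof (rule ccontr)
      assume nQ: "(u + v) mod 36 \<notin> Qset"
      define r where "r = (u + v) mod 36"
      have r36: "r < 36" unfolding r_def by simp
      have r4: "\<not> 4 dvd r"
      proof
        assume "4 dvd r"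
        hence "r \<in> Qset" using r36 unfolding Qset_def insert_iff empty_iff by presburger
        thus False using nQ unfolding r_def by simp
      qed
      have r9: "\<not> 9 dvd r"
      proof
        assume "9 dvd r"
        hence "r \<in> Qset" using r36 unfolding Qset_def insert_iff empty_iff by presburger
        thus False using nQ unfolding r_def by simp
      qed
      define Bs where "Bs = {n\<in>{b<..b+N}. n mod 36 = r mod 36 \<and> \<not> squarefree n}"
      have maps: "(\<lambda>a. a + b) ` Au \<subseteq> Bs"
      proof
        fix y assume "y \<in> (\<lambda>a. a + b) ` Au"
        then obtain a where a: "a \<in> Au" "y = a + b" by auto
        have "a \<in> A" "a mod 36 = u" using a(1) unfolding Au_def by auto
        moreover have "(a + b) mod 36 = (a mod 36 + b mod 36) mod 36" by (simp add: mod_add_eq)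
        ultimately have "(a + b) mod 36 = r mod 36" using b unfolding r_def by simp
        moreover have "\<not> squarefree (a + b)" using nsq \<open>a \<in> A\<close> b(1) by blast
        moreover have "1 \<le> a \<and> a \<le> N" using AN \<open>a \<in> A\<close> by blast
        ultimately show "y \<in> Bs" unfolding Bs_def a(2) by auto
      qed
      have "card Au \<le> card Bs"
        by (rule card_inj_on_le[OF _ maps]) (auto simp: inj_on_def Bs_def)
      hence "real (card Au) \<le> real (card Bs)" by simp
      also have "\<dots> \<le> real N / 36 * (1 - cS) + C + real N / real P + sqrt (2 * real N)"
        using nonsq_bound[OF r4 r9 P1 bN] unfolding Bs_def cS_def C_def S_def by simp
      also have "\<dots> \<le> x / 36 * (1 - c) + \<eta> * x / 144 + \<eta> * x / 144 + \<eta> * x / 72"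
      proof -
        have "real N / 36 * (1 - cS) \<le> x / 36 * (1 - c)"
          by (rule mult_mono) (use Nx cSc cS1 x1(3) in auto)
        moreover have "real N / real P \<le> \<eta> * x / 144"
        proof -
          have "real N / real P = real N * (1 / real P)" by simp
          also have "\<dots> \<le> x * (\<eta> / 144)"
            by (rule mult_mono) (use Nx invP P1 x1(3) in auto)
          finally show ?thesis by (simp add: mult.commute)
        qed
        moreover have "sqrt (2 * real N) \<le> sqrt (2 * x)" using Nx by simp
        ultimately show ?thesis using Cx sq by linarith
      qed
      also have "\<dots> = (1 - c + \<eta>) * x / 36" by (simp add: field_simps)
      finally show False using cAu by linarith
    qed
  qed
qed


end
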